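(* An abelian group $A$ is almost divisible if and only if for every sequence $(q_n)_{n\in\mathbb{N}}$ of integers there exists $m\in\mathbb{N}$ such that for every $n>m$ we have $q_{<n}A=q_{<m}A$.
   Context: For a prime $p$, the $p$-length $l_p(A)$ of an abelian group $A$ is the smallest ordinal $\lambda$ such that $p^\lambda A$ is $p$-divisible, where $p^0A=A$, $p^{\alpha+1}A=p(p^\alpha A)$ and $p^\alpha A=\bigcap_{\beta<\alpha}p^\beta A$ for limit $\alpha$. An abelian group $A$ is called almost divisible if $l_p(A)=0$ for all but finitely many primes $p$ and $l_p(A)<\omega$ for every prime $p$. For a sequence $(q_n)_{n\in\mathbb{N}}$ of integers, $q_{<n}:=\prod_{l<n}q_l$ (so $q_{<0}=1$). *)

theory Defs
  imports "HOL-Computational_Algebra.Primes" "HOL-Library.Extended_Nat"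
begin

text \<open>Abelian groups are modelled as types of class ab_group_add (the whole type is the group).
  Integer multiples in an abelian group:\<close>

definition zmul :: "int \<Rightarrow> 'a::ab_group_add \<Rightarrow> 'a" where
  "zmul k x = (if k \<ge> 0 then ((+) x ^^ nat k) 0 else - (((+) x ^^ nat (- k)) 0))"

definition mult_set :: "int \<Rightarrow> 'a::ab_group_add set \<Rightarrow> 'a set" where
  "mult_set k B = zmul k ` B"

definition p_divisible :: "nat \<Rightarrow> 'a::ab_group_add set \<Rightarrow> bool" where
  "p_divisible p B \<longleftrightarrow> mult_set (int p) B = B"

definition p_power :: "nat \<Rightarrow> nat \<Rightarrow> 'a::ab_group_add set" where
  "p_power p n = (mult_set (int p) ^^ n) UNIV"

text \<open>p-length of the group (the whole type 'a), valued in enat: finite values are exact;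
  the value \<infinity> stands for every ordinal length \<ge> \<omega>.\<close>
definition p_length :: "nat \<Rightarrow> 'a::ab_group_add itself \<Rightarrow> enat" where
  "p_length p _ = (if \<exists>n. p_divisible p (p_power p n :: 'a set)
                    then enat (LEAST n. p_divisible p (p_power p n :: 'a set)) else \<infinity>)"

definition almost_divisible :: "'a::ab_group_add itself \<Rightarrow> bool" where
  "almost_divisible T \<longleftrightarrow>
     finite {p. prime p \<and> p_length p T \<noteq> 0} \<and> (\<forall>p. prime p \<longrightarrow> p_length p T < \<infinity>)"

end

theory Submission
  imports Defs
begin

definition nm :: "nat \<Rightarrow> 'a::ab_group_add \<Rightarrow> 'a" where
  "nm n x = ((+) x ^^ n) 0"

lemma nm_0[simp]: "nm 0 x = 0" by (simp add: nm_def)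
lemma nm_Suc[simp]: "nm (Suc n) x = x + nm n x" by (simp add: nm_def)

lemma zmul_nm: "zmul k x = (if k \<ge> 0 then nm (nat k) x else - nm (nat (-k)) x)"
  by (simp add: zmul_def nm_def)

lemma zmul_0[simp]: "zmul 0 x = 0" by (simp add: zmul_nm)

lemma zmul_succ: "zmul (k+1) x = zmul k x + x"
proof (cases "k \<ge> 0")
  case True
  then have "nat (k+1) = Suc (nat k)" by simp
  then show ?thesis using True by (simp add: zmul_nm add.commute)
next
  case False
  show ?thesis
  proof (cases "k = -1")
    case True then show ?thesis by (simp add: zmul_nm)
  next
    case F2: False
    have "nat (-k) = Suc (nat (-(k+1)))" using False F2 by simp
    then show ?thesis using False F2 by (simp add: zmul_nm)
  qed
qed

lemma zmul_pred: "zmul (k-1) x = zmul k x - x"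
  using zmul_succ[of "k-1" x] by (simp add: algebra_simps)

lemma zmul_add: "zmul (a+b) x = zmul a x + zmul b x"
proof (induction b rule: int_induct[where k=0])
  case base then show ?case by simp
next
  case (step1 i)
  have "zmul (a + (i+1)) x = zmul ((a+i)+1) x" by (simp add: add.assoc)
  also have "\<dots> = zmul a x + zmul i x + x" using step1 by (simp add: zmul_succ)
  finally show ?case by (simp add: zmul_succ add.assoc)
next
  case (step2 i)
  have "zmul (a + (i-1)) x = zmul ((a+i)-1) x" by (simp add: algebra_simps)
  also have "\<dots> = zmul a x + zmul i x - x" using step2 by (simp add: zmul_pred)
  finally show ?case by (simp add: zmul_pred algebra_simps)
qed

lemma zmul_neg: "zmul (-a) x = - zmul a x"
  using zmul_add[of a "-a" x] by (simp add: eq_neg_iff_add_eq_0 add.commute)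

lemma zmul_one[simp]: "zmul 1 x = x"
  using zmul_succ[of 0 x] by simp

lemma zmul_mult: "zmul (a*b) x = zmul a (zmul b x)"
proof (induction a rule: int_induct[where k=0])
  case base then show ?case by simp
next
  case (step1 i)
  have "zmul ((i+1)*b) x = zmul (i*b + b) x" by (simp add: algebra_simps)
  then show ?case using step1 by (simp add: zmul_add zmul_succ)
next
  case (step2 i)
  have "zmul ((i-1)*b) x = zmul (i*b + (-b)) x" by (simp add: algebra_simps)
  also have "\<dots> = zmul (i*b) x + zmul (-b) x" by (rule zmul_add)
  also have "\<dots> = zmul i (zmul b x) - zmul b x" using step2 by (simp add: zmul_neg)
  also have "\<dots> = zmul (i-1) (zmul b x)" by (simp add: zmul_pred)
  finally show ?case .
qed

lemma zmul_distrib: "zmul k (x+y) = zmul k x + zmul k y"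
proof (induction k rule: int_induct[where k=0])
  case base then show ?case by simp
next
  case (step1 i) then show ?case by (simp only: zmul_succ) (simp add: ac_simps)
next
  case (step2 i) then show ?case by (simp only: zmul_pred) (simp add: algebra_simps)
qed

lemma zmul_comm: "zmul a (zmul b x) = zmul b (zmul a x)"
  by (metis zmul_mult mult.commute)

abbreviation M :: "int \<Rightarrow> 'a::ab_group_add set" where
  "M k \<equiv> mult_set k UNIV"

lemma mult_set_M: "mult_set a (M b :: 'a::ab_group_add set) = M (a*b)"
  by (simp add: mult_set_def image_image zmul_mult)

lemma M_one: "(M 1 :: 'a::ab_group_add set) = UNIV"
  by (simp add: mult_set_def)

lemma M_mult_sub: "(M (a*b) :: 'a::ab_group_add set) \<subseteq> M b"
  unfolding mult_set_def zmul_mult by (metis image_subsetI rangeI zmul_comm)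

lemma M_dvd: "d dvd k \<Longrightarrow> (M k :: 'a::ab_group_add set) \<subseteq> M d"
  by (metis M_mult_sub dvdE mult.commute)

lemma M_uminus: "(M (-k) :: 'a::ab_group_add set) = M k"
proof -
  have "-1 dvd k" "-1 dvd (-k)" by auto
  then show ?thesis using M_dvd[of "-k" k] M_dvd[of k "-k"] by auto
qed

lemma M_gcd:
  assumes "(M a :: 'a::ab_group_add set) \<subseteq> M b"
  shows "(M (gcd a b) :: 'a set) \<subseteq> M b"
proof
  fix x :: 'a assume "x \<in> M (gcd a b)"
  then obtain y where y: "x = zmul (gcd a b) y" by (auto simp: mult_set_def)
  obtain u v where uv: "u * a + v * b = gcd a b" using bezout_int by blast
  have "zmul a y \<in> M a" by (simp add: mult_set_def)
  then obtain z where z: "zmul a y = zmul b z" using assms by (auto simp: mult_set_def)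
  have "x = zmul u (zmul a y) + zmul v (zmul b y)"
    using y uv[symmetric] by (simp add: zmul_add zmul_mult)
  also have "\<dots> = zmul b (zmul u z + zmul v y)"
    by (simp add: z zmul_distrib zmul_comm)
  finally show "x \<in> M b" by (simp add: mult_set_def)
qed

lemma p_power_M: "(p_power p n :: 'a::ab_group_add set) = M (int p ^ n)"
proof (induction n)
  case 0 then show ?case by (simp add: p_power_def M_one)
next
  case (Suc n)
  have "p_power p (Suc n) = mult_set (int p) (p_power p n)" by (simp add: p_power_def)
  also have "\<dots> = mult_set (int p) (M (int p ^ n) :: 'a set)" using Suc by simp
  also have "\<dots> = (M (int p ^ Suc n) :: 'a set)" by (simp only: mult_set_M power_Suc)
  finally show ?case .
qed

lemma chain_stab:
  fixes f :: "nat \<Rightarrow> 'b set"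
  assumes "\<And>n. f (Suc n) \<subseteq> f n" "finite (range f)"
  shows "\<exists>m. \<forall>n>m. f n = f m"
proof -
  obtain a where a: "a \<in> range f" "\<forall>b\<in>range f. b \<le> a \<longrightarrow> a = b"
    using finite_has_minimal[OF assms(2)] by blast
  then obtain m where m: "a = f m" by blast
  have "f n = f m" if "n > m" for n
  proof -
    have "f n \<subseteq> f m" using lift_Suc_antimono_le[of f m n] assms(1) that by auto
    then show ?thesis using a m by auto
  qed
  then show ?thesis by blast
qed


lemma forward:
  assumes AD: "almost_divisible TYPE('a::ab_group_add)"
  shows "\<forall>q :: nat \<Rightarrow> int. \<exists>m::nat. \<forall>n>m.
        mult_set (\<Prod>l<n. q l) (UNIV :: 'a set) = mult_set (\<Prod>l<m. q l) UNIV"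
proof
  fix q :: "nat \<Rightarrow> int"
  define S where "S = {p. prime p \<and> p_length p TYPE('a) \<noteq> 0}"
  have finS: "finite S" using AD by (simp add: almost_divisible_def S_def)
  define np where "np p = (LEAST n. p_divisible p (p_power p n :: 'a set))" for p
  have ex: "\<exists>n. p_divisible p (p_power p n :: 'a set)" if "prime p" for p
  proof (rule ccontr)
    assume "\<not> ?thesis"
    then have "p_length p TYPE('a) = \<infinity>" by (simp add: p_length_def)
    with AD that show False unfolding almost_divisible_def by (metis less_irrefl)
  qed
  have stab: "(M (int p * int p ^ np p) :: 'a set) = M (int p ^ np p)" if "prime p" for p
  proof -
    have "p_divisible p (p_power p (np p) :: 'a set)"
      unfolding np_def using ex[OF that] by (rule LeastI_ex)
    then show ?thesis by (simp add: p_divisible_def p_power_M mult_set_M)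
  qed
  have np0: "np p = 0" if "prime p" "p \<notin> S" for p
  proof -
    have "p_length p TYPE('a) = 0" using that by (simp add: S_def)
    then show ?thesis using ex[OF that(1)] by (simp add: p_length_def np_def zero_enat_def)
  qed
  define N where "N = (\<Prod>p\<in>S. int p ^ np p)"
  have Npos: "N > 0" unfolding N_def
    by (rule prod_pos) (auto simp: S_def prime_gt_0_nat)
  have Nfac: "\<exists>R. N = int p ^ np p * R" if "prime p" for p
  proof (cases "p \<in> S")
    case True then show ?thesis unfolding N_def using prod.remove[OF finS True] by blast
  next
    case False then show ?thesis using np0[OF that False] by simp
  qed
  have pN: "(M (int p * N) :: 'a set) = M N" if P: "prime p" for p
  proof -
    obtain R where R: "N = int p ^ np p * R" using Nfac[OF P] by blast
    have "(M (int p * N) :: 'a set) = M (R * (int p * int p ^ np p))" by (simp add: R ac_simps)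
    also have "\<dots> = mult_set R (M (int p * int p ^ np p))" by (simp add: mult_set_M)
    also have "\<dots> = mult_set R (M (int p ^ np p))" by (simp add: stab[OF P])
    also have "\<dots> = M N" by (simp add: mult_set_M R ac_simps)
    finally show ?thesis .
  qed
  have kN: "k \<noteq> 0 \<longrightarrow> (M (k * N) :: 'a set) = M N" for k
  proof (induction k rule: prime_divisors_induct)
    case zero then show ?case by simp
  next
    case (unit x)
    then have "\<bar>x\<bar> = 1" by (simp only: zdvd1_eq)
    then have "x = 1 \<or> x = -1" by linarith
    then show ?case
    proof
      assume "x = 1" then show ?case by simp
    next
      assume "x = -1"
      then have "x * N = - N" by simp
      then show ?case by (simp only: M_uminus) simp
    qed
  next
    case (factor p x)
    have p: "p = int (nat p)" "prime (nat p)" using factor(1) prime_ge_0_int by auto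
    show ?case
    proof
      assume "p * x \<noteq> 0"
      then have "x \<noteq> 0" by auto
      then have xN: "(M (x * N) :: 'a set) = M N" using factor by auto
      have "(M (p * (x * N)) :: 'a set) = mult_set p (M (x * N))" by (simp only: mult_set_M)
      also have "\<dots> = mult_set p (M N)" by (simp only: xN)
      also have "\<dots> = M (p * N)" by (simp add: mult_set_M)
      also have "\<dots> = M N" using pN[OF p(2)] p(1) by metis
      finally show "(M (p * x * N) :: 'a set) = M N" by (simp add: ac_simps)
    qed
  qed
  have Mk: "(M k :: 'a set) = M (gcd N k)" if "k \<noteq> 0" for k
  proof
    have "(M N :: 'a set) = M (N * k)" using kN[of k] that by (simp add: ac_simps)
    also have "\<dots> \<subseteq> M k" by (rule M_mult_sub)
    finally show "M (gcd N k) \<subseteq> (M k :: 'a set)" by (rule M_gcd)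
    show "(M k :: 'a set) \<subseteq> M (gcd N k)" by (rule M_dvd) simp
  qed
  define f where "f n = (M (\<Prod>l<n. q l) :: 'a set)" for n
  have dec: "f (Suc n) \<subseteq> f n" for n
    unfolding f_def by (rule M_dvd) simp
  have "range f \<subseteq> insert (M 0) (M ` {0..N})"
  proof
    fix X assume "X \<in> range f"
    then obtain n where X: "X = f n" by blast
    show "X \<in> insert (M 0) (M ` {0..N})"
    proof (cases "(\<Prod>l<n. q l) = 0")
      case True
      then have "f n = M 0" by (simp only: f_def)
      then show ?thesis by (simp add: X)
    next
      case False
      have "gcd N (\<Prod>l<n. q l) \<le> N" using Npos by (simp add: zdvd_imp_le)
      then have "gcd N (\<Prod>l<n. q l) \<in> {0..N}" by simp
      then show ?thesis using Mk[OF False] by (simp add: X f_def)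
    qed
  qed
  then have "finite (range f)" by (rule finite_subset) simp
  from chain_stab[OF dec this] show "\<exists>m::nat. \<forall>n>m.
        mult_set (\<Prod>l<n. q l) (UNIV :: 'a set) = mult_set (\<Prod>l<m. q l) UNIV"
    by (simp add: f_def)
qed


lemma backward:
  assumes H: "\<forall>q :: nat \<Rightarrow> int. \<exists>m::nat. \<forall>n>m.
        mult_set (\<Prod>l<n. q l) (UNIV :: 'a set) = mult_set (\<Prod>l<m. q l) UNIV"
  shows "almost_divisible TYPE('a::ab_group_add)"
proof -
  have fin: "p_length p TYPE('a) < \<infinity>" if P: "prime p" for p
  proof -
    obtain m :: nat where m: "\<forall>n>m. mult_set (\<Prod>l<n. int p) (UNIV :: 'a set) = mult_set (\<Prod>l<m. int p) UNIV"
      using H[rule_format, of "\<lambda>_. int p"] by blast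
    have "(M (int p * int p ^ m) :: 'a set) = M (int p ^ m)" using m[rule_format, of "Suc m"] by simp
    then have "p_divisible p (p_power p m :: 'a set)"
      by (simp only: p_divisible_def p_power_M mult_set_M)
    then have "\<exists>n. p_divisible p (p_power p n :: 'a set)" by blast
    then show ?thesis by (simp add: p_length_def)
  qed
  have "finite {p. prime p \<and> p_length p TYPE('a) \<noteq> 0}" (is "finite ?S")
  proof (rule ccontr)
    assume "infinite ?S"
    then obtain e :: "nat \<Rightarrow> nat" where e: "inj e" "range e \<subseteq> ?S"
      unfolding infinite_iff_countable_subset by (elim exE conjE) (rule that)
    obtain m :: nat where m: "\<forall>n>m. mult_set (\<Prod>l<n. int (e l)) (UNIV :: 'a set) = mult_set (\<Prod>l<m. int (e l)) UNIV"
      using H[rule_format, of "\<lambda>l. int (e l)"] by blast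
    define P where "P = (\<Prod>l<m. int (e l))"
    define p where "p = e m"
    have pS: "prime p" "p_length p TYPE('a) \<noteq> 0" using e(2) unfolding p_def by auto
    have eq: "(M (P * int p) :: 'a set) = M P" using m[rule_format, of "Suc m"] by (simp add: P_def p_def)
    have "(M (P * int p) :: 'a set) \<subseteq> M (int p)" by (rule M_mult_sub)
    then have "(M P :: 'a set) \<subseteq> M (int p)" using eq by simp
    then have sub: "(M (gcd P (int p)) :: 'a set) \<subseteq> M (int p)" by (rule M_gcd)
    have ndvd: "\<not> int p dvd P"
    proof
      assume "int p dvd P"
      then have d: "int p dvd (\<Prod>l\<in>{..<m}. int (e l))" by (simp only: P_def)
      have pr: "prime (int p)" using pS(1) by simp
      have "\<exists>l\<in>{..<m}. int p dvd int (e l)"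
        using prime_dvd_prod_iff[OF finite_lessThan pr, of "\<lambda>l. int (e l)"] d by blast
      then obtain l where l: "l < m" "int p dvd int (e l)" by blast
      then have "p dvd e l" by simp
      moreover have "prime (e l)" using e(2) by auto
      ultimately have "p = e l" using primes_dvd_imp_eq pS(1) by blast
      then have "m = l" using e(1) unfolding p_def by (simp add: inj_eq)
      then show False using l by simp
    qed
    have "coprime (int p) P" using prime_imp_coprime[of "int p" P] pS(1) ndvd by simp
    then have "gcd P (int p) = 1" by (simp add: coprime_iff_gcd_eq_1 gcd.commute)
    then have "(M (int p) :: 'a set) = UNIV" using sub by (simp add: M_one top.extremum_unique)
    then have "p_divisible p (p_power p 0 :: 'a set)"
      by (simp add: p_divisible_def p_power_M M_one)
    then have "(LEAST n. p_divisible p (p_power p n :: 'a set)) = 0" by (rule Least_eq_0)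
    then have "p_length p TYPE('a) = 0" using \<open>p_divisible p (p_power p 0 :: 'a set)\<close>
      unfolding p_length_def zero_enat_def by auto
    with pS show False by simp
  qed
  then show ?thesis using fin by (simp add: almost_divisible_def)
qed

theorem mainTheorem2:
  shows "almost_divisible TYPE('a::ab_group_add) \<longleftrightarrow>
    (\<forall>q :: nat \<Rightarrow> int. \<exists>m::nat. \<forall>n>m.
        mult_set (\<Prod>l<n. q l) (UNIV :: 'a set) = mult_set (\<Prod>l<m. q l) UNIV)"
  using forward backward by blast

end
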